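(* Let $\mathcal{H}$ be a complex Hilbert space, let $T\in\mathcal{B}(\mathcal{H})$ be a normaloid operator, and let $q\in\mathbb{C}$ with $|q|\le 1$. Then \[ |q|\, w(T)\le w_q(T)\le w(T). \]
   Context: $\mathcal{B}(\mathcal{H})$ denotes the bounded linear operators on $\mathcal{H}$ with the operator norm $\|\cdot\|$. The numerical radius is $w(T)=\sup\{|\langle Tx,x\rangle|:\|x\|=1\}$. For $|q|\le 1$, the $q$-numerical range is $W_q(T)=\{\langle Tx,y\rangle: x,y\in\mathcal{H},\ \|x\|=\|y\|=1,\ \langle x,y\rangle=q\}$ and the $q$-numerical radius is $w_q(T)=\sup\{|z|: z\in W_q(T)\}$. An operator $T$ is normaloid if $w(T)=\|T\|$. *)

theory Defs
  imports "HOL-Analysis.Analysis"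
begin

text \<open>Complex inner product spaces (inner product linear in the first argument,
conjugate-linear in the second), and complex Hilbert spaces.\<close>

class complex_inner = real_normed_vector +
  fixes scaleC :: "complex \<Rightarrow> 'a \<Rightarrow> 'a"
    and cinner :: "'a \<Rightarrow> 'a \<Rightarrow> complex"
  assumes scaleC_of_real: "scaleC (complex_of_real r) x = scaleR r x"
    and scaleC_add_right: "scaleC a (x + y) = scaleC a x + scaleC a y"
    and scaleC_add_left: "scaleC (a + b) x = scaleC a x + scaleC b x"
    and scaleC_scaleC: "scaleC a (scaleC b x) = scaleC (a * b) x"
    and scaleC_one: "scaleC 1 x = x"
    and cinner_add_left: "cinner (x + y) z = cinner x z + cinner y z"
    and cinner_scaleC_left: "cinner (scaleC c x) y = c * cinner x y"
    and cinner_commute: "cinner x y = cnj (cinner y x)"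
    and cinner_self_nonneg: "0 \<le> Re (cinner x x)"
    and cinner_self_eq_zero: "cinner x x = 0 \<longleftrightarrow> x = 0"
    and norm_eq_sqrt_cinner: "norm x = sqrt (Re (cinner x x))"

class chilbert_space = complex_inner + complete_space

definition bounded_clinear_op :: "('a::complex_inner \<Rightarrow> 'a) \<Rightarrow> bool" where
  "bounded_clinear_op T \<longleftrightarrow> bounded_linear T \<and> (\<forall>c x. T (scaleC c x) = scaleC c (T x))"

definition numrad :: "('a::complex_inner \<Rightarrow> 'a) \<Rightarrow> real" where
  "numrad T = Sup {cmod (cinner (T x) x) | x. norm x = 1}"

definition qnumrange :: "complex \<Rightarrow> ('a::complex_inner \<Rightarrow> 'a) \<Rightarrow> complex set" where
  "qnumrange q T = {cinner (T x) y | x y. norm x = 1 \<and> norm y = 1 \<and> cinner x y = q}"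

definition qnumrad :: "complex \<Rightarrow> ('a::complex_inner \<Rightarrow> 'a) \<Rightarrow> real" where
  "qnumrad q T = Sup (cmod ` qnumrange q T)"

definition normaloid :: "('a::complex_inner \<Rightarrow> 'a) \<Rightarrow> bool" where
  "normaloid T \<longleftrightarrow> numrad T = onorm T"

end

theory Submission
  imports Defs
begin

lemma cinner_add_right: "cinner x (y + z) = cinner x y + cinner x z"
  by (metis cinner_commute cinner_add_left complex_cnj_add)

lemma cinner_scaleC_right: "cinner x (scaleC c y) = cnj c * cinner x y"
  by (metis cinner_commute cinner_scaleC_left complex_cnj_mult complex_cnj_cnj)

lemma scaleC_minus1: "scaleC (-1) x = - (x::'a::complex_inner)"
  using scaleC_of_real[of "-1" x] by simp

lemma cinner_minus_left: "cinner (- x) y = - cinner x (y::'a::complex_inner)"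
  using cinner_scaleC_left[of "-1" x y] scaleC_minus1[of x] by simp

lemma cinner_diff_left: "cinner (x - y) z = cinner x z - cinner y (z::'a::complex_inner)"
  using cinner_add_left[of x "-y" z] cinner_minus_left[of y z] by simp

lemma cinner_diff_right: "cinner x (y - z) = cinner x y - cinner x (z::'a::complex_inner)"
  by (metis cinner_commute cinner_diff_left complex_cnj_diff)

lemma cinner_self_real: "cinner x x = complex_of_real ((norm x)^2)"
proof (rule complex_eqI)
  have "Im (cinner x x) = Im (cnj (cinner x x))" using cinner_commute[of x x] by simp
  then show "Im (cinner x x) = Im (complex_of_real ((norm x)^2))" by simp
  show "Re (cinner x x) = Re (complex_of_real ((norm x)^2))"
    using norm_eq_sqrt_cinner[of x] cinner_self_nonneg[of x] by simp
qed

lemma mult_cnj_cmod: "c * cnj c = complex_of_real ((cmod c)^2)"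
  using complex_norm_square[of c] by (metis of_real_power)

lemma norm_scaleC: "norm (scaleC c x) = cmod c * norm (x::'a::complex_inner)"
proof -
  have "cinner (scaleC c x) (scaleC c x) = c * cnj c * cinner x x"
    by (simp add: cinner_scaleC_left cinner_scaleC_right)
  also have "\<dots> = complex_of_real ((cmod c * norm x)^2)"
    by (simp add: cinner_self_real mult_cnj_cmod power_mult_distrib)
  finally show ?thesis using norm_eq_sqrt_cinner[of "scaleC c x"] by simp
qed

lemma cauchy_schwarz: "cmod (cinner x y) \<le> norm x * norm (y::'a::complex_inner)"
proof (cases "y = 0")
  case True
  have "cinner x 0 + cinner x 0 = cinner x 0" using cinner_add_right[of x 0 0] by simp
  then have "cinner x 0 = 0" by simp
  then show ?thesis using True by simp
next
  case False
  define n where "n = (norm y)^2"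
  have n: "n > 0" using False n_def by simp
  define c where "c = cinner x y"
  define z where "z = x - scaleC (c / n) y"
  have yy: "cinner y y = n" using cinner_self_real n_def by simp
  have yx: "cinner y x = cnj c" using c_def cinner_commute by simp
  have "cinner z z = cinner x x - cnj (c/n) * c - (c/n) * cnj c + (c/n) * cnj (c/n) * n"
    unfolding z_def by (simp add: cinner_diff_left cinner_diff_right cinner_scaleC_left
        cinner_scaleC_right yy yx c_def algebra_simps)
  also have "\<dots> = cinner x x - c * cnj c / n"
    using n by (simp add: field_simps)
  also have "\<dots> = complex_of_real ((norm x)^2 - (cmod c)^2 / n)"
    by (simp add: cinner_self_real mult_cnj_cmod)
  finally have "0 \<le> (norm x)^2 - (cmod c)^2 / n"
    using cinner_self_nonneg[of z] by simp
  then have "(cmod c)^2 \<le> (norm x)^2 * (norm y)^2" using n n_def by (simp add: field_simps)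
  then have "(cmod c)^2 \<le> (norm x * norm y)^2" by (simp add: power_mult_distrib)
  then show ?thesis unfolding c_def by (rule power2_le_imp_le) simp
qed

lemma cinner_zero_right: "cinner x 0 = 0"
proof -
  have "cinner x 0 + cinner x 0 = cinner x 0" using cinner_add_right[of x 0 0] by simp
  then show ?thesis by simp
qed

lemma proj_orth:
  assumes "norm x = 1"
  shows "cinner (w - scaleC (cinner w x) x) x = 0"
proof -
  have "cinner x x = 1" using cinner_self_real[of x] assms by simp
  then show ?thesis by (simp add: cinner_diff_left cinner_scaleC_left)
qed

lemma normalize_orth:
  assumes "w \<noteq> 0" "cinner w x = 0"
  shows "\<exists>z. norm z = 1 \<and> cinner x z = 0"
proof (intro exI conjI)
  let ?z = "scaleC (complex_of_real (1 / norm w)) w"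
  have "cmod (complex_of_real (1 / norm w)) = 1 / norm w" by (simp add: norm_divide)
  then show "norm ?z = 1" using assms by (simp add: norm_scaleC del: of_real_divide)
  have "cinner ?z x = 0" using assms by (simp add: cinner_scaleC_left)
  then show "cinner x ?z = 0" using cinner_commute[of x ?z] by simp
qed

lemma orth_exists:
  fixes x :: "'a::complex_inner"
  assumes dim2: "\<exists>u v::'a. norm u = 1 \<and> norm v = 1 \<and> cinner u v = 0"
    and x: "norm x = 1"
  shows "\<exists>z. norm z = 1 \<and> cinner x z = 0"
proof -
  obtain u v :: 'a where u: "norm u = 1" and v: "norm v = 1" and uv: "cinner u v = 0"
    using dim2 by blast
  show ?thesis
  proof (cases "u - scaleC (cinner u x) x = 0")
    case False
    then show ?thesis using normalize_orth proj_orth[OF x] by blast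
  next
    case Tu: True
    show ?thesis
    proof (cases "v - scaleC (cinner v x) x = 0")
      case False
      then show ?thesis using normalize_orth proj_orth[OF x] by blast
    next
      case True
      have ue: "u = scaleC (cinner u x) x" using Tu by simp
      have ve: "v = scaleC (cinner v x) x" using True by simp
      have xx: "cinner x x = 1" using cinner_self_real[of x] x by simp
      have "cinner u v = cinner u x * cnj (cinner v x) * cinner x x"
        by (subst ue, subst ve) (simp add: cinner_scaleC_left cinner_scaleC_right)
      then have "cinner u x * cnj (cinner v x) = 0" using uv xx by simp
      then have "cinner u x = 0 \<or> cinner v x = 0" by simp
      then have "u = 0 \<or> v = 0" using ue ve
        by (metis cinner_zero_right cinner_self_eq_zero cinner_scaleC_left mult_zero_left)
      then show ?thesis using u v by auto
    qed
  qed
qed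

lemma construct:
  assumes x: "norm x = 1" and z: "norm z = 1" and xz: "cinner x z = 0"
    and t: "t^2 + (cmod q)^2 = 1"
  defines "y \<equiv> scaleC (cnj q) x + scaleC (complex_of_real t) z"
  shows "norm y = 1" "cinner x y = q" "cinner w y = q * cinner w x + t * cinner w z"
proof -
  have xx: "cinner x x = 1" using cinner_self_real[of x] x by simp
  have zz: "cinner z z = 1" using cinner_self_real[of z] z by simp
  have zx: "cinner z x = 0" using cinner_commute[of z x] xz by simp
  have "cinner y y = cnj q * q + complex_of_real t * complex_of_real t"
    unfolding y_def by (simp add: cinner_add_left cinner_add_right cinner_scaleC_left
        cinner_scaleC_right xx zz xz zx)
  also have "\<dots> = complex_of_real ((cmod q)^2 + t^2)"
    using mult_cnj_cmod[of q] by (simp add: mult.commute power2_eq_square)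
  also have "\<dots> = 1" using t by (simp add: add.commute del: of_real_add of_real_power)
  finally show "norm y = 1" using norm_eq_sqrt_cinner[of y] by simp
  show "cinner x y = q"
    unfolding y_def by (simp add: cinner_add_right cinner_scaleC_right xx xz)
  show "cinner w y = q * cinner w x + t * cinner w z"
    unfolding y_def by (simp add: cinner_add_right cinner_scaleC_right)
qed

lemma cmod_max_pm: "cmod a \<le> max (cmod (a + b)) (cmod (a - b))"
proof -
  have "2 * cmod a = cmod ((a + b) + (a - b))" by (simp add: norm_mult[symmetric])
  also have "\<dots> \<le> cmod (a + b) + cmod (a - b)" by (rule norm_triangle_ineq)
  finally show ?thesis by simp
qed

theorem theorem2p7:
  fixes T :: "'a::chilbert_space \<Rightarrow> 'a" and q :: complex
  assumes dim2: "\<exists>u v::'a. norm u = 1 \<and> norm v = 1 \<and> cinner u v = 0"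
    and T: "bounded_clinear_op T"
    and nl: "normaloid T"
    and q: "cmod q \<le> 1"
  shows "cmod q * numrad T \<le> qnumrad q T \<and> qnumrad q T \<le> numrad T"
proof -
  have bl: "bounded_linear T" using T unfolding bounded_clinear_op_def by simp
  define Q where "Q = cmod ` qnumrange q T"
  define S where "S = {cmod (cinner (T x) x) | x. norm x = 1}"
  have bnd: "cmod (cinner (T x) y) \<le> onorm T" if "norm x = 1" "norm y = 1" for x y
  proof -
    have "cmod (cinner (T x) y) \<le> norm (T x) * norm y" by (rule cauchy_schwarz)
    also have "\<dots> = norm (T x)" using that by simp
    also have "\<dots> \<le> onorm T * norm x" using onorm[OF bl] by blast
    finally show ?thesis using that by simp
  qed
  have Qbdd: "bdd_above Q"
    unfolding Q_def qnumrange_def using bnd by (intro bdd_aboveI[of _ "onorm T"]) blast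
  define t where "t = sqrt (1 - (cmod q)^2)"
  have t1: "t^2 + (cmod q)^2 = 1" using q unfolding t_def
    by (simp add: power_le_one)
  have t2: "(-t)^2 + (cmod q)^2 = 1" using t1 by simp
  have key: "cmod q * cmod (cinner (T x) x) \<le> Sup Q" if x: "norm x = 1" for x
  proof -
    obtain z where z: "norm z = 1" "cinner x z = 0" using orth_exists[OF dim2 x] by blast
    note c1 = construct[OF x z t1]
    note c2 = construct[OF x z t2]
    have in1: "cmod (q * cinner (T x) x + t * cinner (T x) z) \<in> Q"
      unfolding Q_def qnumrange_def using c1(1,2) c1(3)[of "T x"] x by (intro imageI) (smt (verit) mem_Collect_eq)
    have in2: "cmod (q * cinner (T x) x - t * cinner (T x) z) \<in> Q"
      unfolding Q_def qnumrange_def using c2(1,2) c2(3)[of "T x"] x by (intro imageI) (smt (verit) mem_Collect_eq of_real_minus mult_minus_left diff_conv_add_uminus)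
    have "cmod q * cmod (cinner (T x) x) = cmod (q * cinner (T x) x)" by (simp add: norm_mult)
    also have "\<dots> \<le> max (cmod (q * cinner (T x) x + t * cinner (T x) z))
        (cmod (q * cinner (T x) x - t * cinner (T x) z))" by (rule cmod_max_pm)
    also have "\<dots> \<le> Sup Q" using in1 in2 Qbdd by (simp add: cSup_upper)
    finally show ?thesis .
  qed
  obtain u :: 'a where u: "norm u = 1" using dim2 by blast
  have Sne: "S \<noteq> {}" using u unfolding S_def by blast
  have Qne: "Q \<noteq> {}"
  proof -
    obtain z where z: "norm z = 1" "cinner u z = 0" using orth_exists[OF dim2 u] by blast
    note c1 = construct[OF u z t1]
    have "cmod (q * cinner (T u) u + t * cinner (T u) z) \<in> Q"
      unfolding Q_def qnumrange_def using c1(1,2) c1(3)[of "T u"] u by (intro imageI) (smt (verit) mem_Collect_eq)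
    then show ?thesis by blast
  qed
  have Qnn: "0 \<le> Sup Q"
  proof -
    obtain a where "a \<in> Q" using Qne by blast
    moreover have "0 \<le> a" using \<open>a \<in> Q\<close> unfolding Q_def by auto
    ultimately show ?thesis using Qbdd by (meson cSup_upper order_trans)
  qed
  have part1: "cmod q * Sup S \<le> Sup Q"
  proof (cases "q = 0")
    case True
    then show ?thesis using Qnn by simp
  next
    case False
    have "Sup S \<le> Sup Q / cmod q"
    proof (rule cSup_least[OF Sne])
      fix s assume "s \<in> S"
      then obtain x where x: "norm x = 1" "s = cmod (cinner (T x) x)" unfolding S_def by blast
      then show "s \<le> Sup Q / cmod q" using key[OF x(1)] False
        by (simp add: field_simps mult.commute)
    qed
    then show ?thesis using False by (simp add: field_simps mult.commute)
  qed
  have part2: "Sup Q \<le> onorm T"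
  proof (rule cSup_least[OF Qne])
    fix a assume "a \<in> Q"
    then show "a \<le> onorm T" unfolding Q_def qnumrange_def using bnd by blast
  qed
  show ?thesis using part1 part2 nl
    unfolding normaloid_def numrad_def qnumrad_def Q_def S_def by simp
qed

end
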